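(* Let $S=K[x_0,x_1,x_2]$. For every integer $1\le d\le 6$, every saturated Borel ideal $I\subset S$ with Hilbert polynomial $p_{S/I}(z)=d$ is a hilb-segment ideal with respect to some term order. For every integer $d\ge7$ there exists a saturated Borel ideal $I\subset S$ with Hilbert polynomial $p_{S/I}(z)=d$ which is not a hilb-segment ideal with respect to any term order.
   Context: $K$ algebraically closed of characteristic $0$, standard grading, $x_0<x_1<x_2$; $\mathbb T_t$ is the set of terms of degree $t$. A monomial ideal is Borel if $x^\alpha\in I$, $\alpha_j>0$, $j<2$ imply $x^\alpha x_{j+1}/x_j\in I$. Given a term order $\preceq$, $B\subseteq\mathbb T_t$ is a segment if $\tau\in B$, $\tau'\in\mathbb T_t$, $\tau'\succ\tau$ imply $\tau'\in B$. A nonzero saturated Borel ideal $I$ is a hilb-segment ideal w.r.t. $\preceq$ if $I\cap\mathbb T_r$ is a segment, where $r$ is the Gotzmann number of the Hilbert polynomial of $S/I$; for a constant Hilbert polynomial $d$ the Gotzmann number is $d$. *)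

theory Defs
  imports Main
begin

text \<open>Terms (monomials) of S = K[x0,x1,x2] are represented by their exponent
vectors (a,b,c), standing for x0^a x1^b x2^c.  A monomial ideal of S is
represented by the set of terms it contains (which determines it).\<close>

type_synonym term3 = "nat \<times> nat \<times> nat"

definition tdeg :: "term3 \<Rightarrow> nat" where
  "tdeg \<alpha> = (case \<alpha> of (a, b, c) \<Rightarrow> a + b + c)"

definition tmul :: "term3 \<Rightarrow> term3 \<Rightarrow> term3" where
  "tmul \<alpha> \<beta> = (case \<alpha> of (a, b, c) \<Rightarrow> case \<beta> of (a', b', c') \<Rightarrow> (a + a', b + b', c + c'))"

definition Tdeg :: "nat \<Rightarrow> term3 set" where
  "Tdeg t = {\<alpha>. tdeg \<alpha> = t}"

definition monomial_ideal :: "term3 set \<Rightarrow> bool" where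
  "monomial_ideal I \<longleftrightarrow> (\<forall>\<alpha>\<in>I. \<forall>\<beta>. tmul \<alpha> \<beta> \<in> I)"

definition borel :: "term3 set \<Rightarrow> bool" where
  "borel I \<longleftrightarrow> monomial_ideal I \<and>
     (\<forall>a b c. (a, b, c) \<in> I \<longrightarrow>
        (0 < a \<longrightarrow> (a - 1, b + 1, c) \<in> I) \<and> (0 < b \<longrightarrow> (a, b - 1, c + 1) \<in> I))"

text \<open>Saturation w.r.t. the irrelevant maximal ideal m=(x0,x1,x2): I : m^\<infinity> = I.
For a monomial ideal, x^\<alpha> \<in> I : m^k iff x^\<alpha> x^\<beta> \<in> I for all terms x^\<beta> of degree k.\<close>
definition saturated :: "term3 set \<Rightarrow> bool" where
  "saturated I \<longleftrightarrow> (\<forall>\<alpha>. (\<exists>k. \<forall>\<beta>. tdeg \<beta> = k \<longrightarrow> tmul \<alpha> \<beta> \<in> I) \<longrightarrow> \<alpha> \<in> I)"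

definition hilb_fun :: "term3 set \<Rightarrow> nat \<Rightarrow> nat" where
  "hilb_fun I t = card {\<alpha>. tdeg \<alpha> = t \<and> \<alpha> \<notin> I}"

text \<open>The Hilbert polynomial of S/I is the constant d: the Hilbert function equals d
for all sufficiently large t.\<close>
definition hilb_poly_const :: "term3 set \<Rightarrow> nat \<Rightarrow> bool" where
  "hilb_poly_const I d \<longleftrightarrow> (\<exists>t0. \<forall>t\<ge>t0. hilb_fun I t = d)"

definition term_order :: "(term3 \<Rightarrow> term3 \<Rightarrow> bool) \<Rightarrow> bool" where
  "term_order le \<longleftrightarrow>
     (\<forall>\<alpha>. le \<alpha> \<alpha>) \<and>
     (\<forall>\<alpha> \<beta>. le \<alpha> \<beta> \<and> le \<beta> \<alpha> \<longrightarrow> \<alpha> = \<beta>) \<and>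
     (\<forall>\<alpha> \<beta> \<gamma>. le \<alpha> \<beta> \<and> le \<beta> \<gamma> \<longrightarrow> le \<alpha> \<gamma>) \<and>
     (\<forall>\<alpha> \<beta>. le \<alpha> \<beta> \<or> le \<beta> \<alpha>) \<and>
     (\<forall>\<alpha>. le (0, 0, 0) \<alpha>) \<and>
     (\<forall>\<alpha> \<beta> \<gamma>. le \<alpha> \<beta> \<longrightarrow> le (tmul \<alpha> \<gamma>) (tmul \<beta> \<gamma>))"

definition segment :: "(term3 \<Rightarrow> term3 \<Rightarrow> bool) \<Rightarrow> nat \<Rightarrow> term3 set \<Rightarrow> bool" where
  "segment le t B \<longleftrightarrow> B \<subseteq> Tdeg t \<and>
     (\<forall>\<tau>\<in>B. \<forall>\<tau>'\<in>Tdeg t. le \<tau> \<tau>' \<and> \<tau>' \<noteq> \<tau> \<longrightarrow> \<tau>' \<in> B)"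

text \<open>Hilb-segment ideal for constant Hilbert polynomial d (Gotzmann number r = d):
a nonzero saturated Borel ideal I with I \<inter> T_d a segment.\<close>
definition hilb_segment_const :: "(term3 \<Rightarrow> term3 \<Rightarrow> bool) \<Rightarrow> nat \<Rightarrow> term3 set \<Rightarrow> bool" where
  "hilb_segment_const le d I \<longleftrightarrow>
     I \<noteq> {} \<and> saturated I \<and> borel I \<and> segment le d (I \<inter> Tdeg d)"

end

theory Submission
  imports Defs
begin



definition lew :: "nat\<Rightarrow>nat\<Rightarrow>term3\<Rightarrow>term3\<Rightarrow>bool" where
 "lew w1 w2 \<alpha> \<beta> \<longleftrightarrow> (case \<alpha> of (a,b,c) \<Rightarrow> case \<beta> of (a',b',c') \<Rightarrow>
    w1*b+w2*c < w1*b'+w2*c' \<or> (w1*b+w2*c = w1*b'+w2*c' \<and> (a<a' \<or> (a=a' \<and> (b<b' \<or> (b=b' \<and> c \<le> c'))))))"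

lemma lew_to: "term_order (lew w1 w2)"
  unfolding term_order_def lew_def tmul_def
  by (auto split: prod.splits simp: add_mult_distrib2)

lemma obstruction:
  assumes to: "term_order le" and seg: "segment le d (I \<inter> Tdeg d)"
   and t1: "t1 \<in> Tdeg d" "t1 \<notin> I" and t2: "t2 \<in> Tdeg d" "t2 \<notin> I"
   and s1: "s1 \<in> Tdeg d" "s1 \<in> I" and s2: "s2 \<in> Tdeg d" "s2 \<in> I"
   and eq: "tmul t1 t2 = tmul s1 s2"
  shows False
proof -
  have key: "le t s" if "t \<in> Tdeg d" "t \<notin> I" "s \<in> Tdeg d" "s \<in> I" for t s
  proof (rule ccontr)
    assume "\<not> le t s"
    then have "le s t" using to unfolding term_order_def by blast
    moreover have "t \<noteq> s" using that by blast
    ultimately have "t \<in> I" using seg that unfolding segment_def by blast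
    then show False using that by blast
  qed
  have comm: "tmul x y = tmul y x" for x y unfolding tmul_def by (auto split: prod.splits)
  have m: "le (tmul x z) (tmul y z)" if "le x y" for x y z using to that unfolding term_order_def by blast
  have A: "le (tmul t1 t2) (tmul s1 t2)" using m key[OF t1 s1] .
  have B: "le (tmul s1 t2) (tmul s1 s2)" using m[OF key[OF t2 s2], of s1] comm by metis
  have "tmul s1 t2 = tmul t1 t2" using A B eq to unfolding term_order_def by metis
  then have "s1 = t1" unfolding tmul_def by (auto split: prod.splits)
  then show False using t1 s1 by blast
qed




definition Lf :: "nat \<Rightarrow> nat \<Rightarrow> nat \<Rightarrow> nat \<Rightarrow> nat" where
  "Lf x y z c = (if c = 0 then x else if c = 1 then y else if c = 2 then z else 0)"
definition IL :: "(nat\<Rightarrow>nat) \<Rightarrow> term3 set" where "IL L = {\<alpha>. case \<alpha> of (a,b,c) \<Rightarrow> L c \<le> b}"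
lemma IL_mem[simp]: "(a,b,c) \<in> IL L \<longleftrightarrow> L c \<le> b" unfolding IL_def by simp
definition good :: "nat\<Rightarrow>nat\<Rightarrow>nat\<Rightarrow>bool" where "good x y z \<longleftrightarrow> (0<y \<longrightarrow> y<x) \<and> (0<z\<longrightarrow>z<y)"

lemma IL_borel: assumes "good x y z" shows "borel (IL (Lf x y z))"
  using assms unfolding borel_def monomial_ideal_def tmul_def good_def Lf_def
  by (auto split: prod.splits if_splits)

lemma IL_sat: "saturated (IL L)"
  unfolding saturated_def
proof (intro allI impI)
  fix \<alpha> assume "\<exists>k. \<forall>\<beta>. tdeg \<beta> = k \<longrightarrow> tmul \<alpha> \<beta> \<in> IL L"
  then obtain k where k: "\<forall>\<beta>. tdeg \<beta> = k \<longrightarrow> tmul \<alpha> \<beta> \<in> IL L" by blast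
  have "tmul \<alpha> (k,0,0) \<in> IL L" using k by (simp add: tdeg_def)
  then show "\<alpha> \<in> IL L" by (cases \<alpha>) (simp add: tmul_def)
qed

lemma hilb_reduce:
  assumes "\<forall>a b c. (a,b,c) \<in> I \<longleftrightarrow> (0,b,c) \<in> I"
  shows "hilb_fun I t = card {(b,c). b+c \<le> t \<and> (0,b,c) \<notin> I}"
proof -
  have "bij_betw (\<lambda>(a,b,c). (b,c)) {\<alpha>. tdeg \<alpha> = t \<and> \<alpha> \<notin> I} {(b,c). b+c \<le> t \<and> (0,b,c) \<notin> I}"
    by (rule bij_betw_byWitness[where f'="\<lambda>(b,c). (t-b-c,b,c)"])
       (use assms in \<open>auto simp: tdeg_def; metis\<close>)+
  then show ?thesis unfolding hilb_fun_def by (rule bij_betw_same_card)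
qed

definition R :: "nat \<Rightarrow> nat \<Rightarrow> (nat \<times> nat) set" where "R x c = (\<lambda>b. (b,c)) ` {..<x}"

lemma rows_card: "card (R x 0 \<union> R y 1 \<union> R z 2) = x + y + z"
proof -
  have c: "card (R x c) = x" for x c unfolding R_def by (subst card_image) (auto simp: inj_on_def)
  have "card (R x 0 \<union> R y 1 \<union> R z 2) = card (R x 0 \<union> R y 1) + card (R z 2)"
    by (rule card_Un_disjoint) (auto simp: R_def)
  also have "card (R x 0 \<union> R y 1) = card (R x 0) + card (R y 1)"
    by (rule card_Un_disjoint) (auto simp: R_def)
  finally show ?thesis by (simp add: c)
qed

lemma IL_hilb: assumes "good x y z" "t \<ge> x + 2"
  shows "hilb_fun (IL (Lf x y z)) t = x + y + z"
proof -
  have "hilb_fun (IL (Lf x y z)) t = card {(b,c). b+c \<le> t \<and> (0,b,c) \<notin> IL (Lf x y z)}"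
    by (rule hilb_reduce) simp
  also have "{(b,c). b+c \<le> t \<and> (0,b,c) \<notin> IL (Lf x y z)} = R x 0 \<union> R y 1 \<union> R z 2"
    using assms unfolding R_def good_def Lf_def by (auto split: if_splits)
  finally show ?thesis using rows_card by simp
qed

lemma IL_hpc: assumes "good x y z" shows "hilb_poly_const (IL (Lf x y z)) (x+y+z)"
  unfolding hilb_poly_const_def using IL_hilb[OF assms] by blast




lemma mono_ideal: "monomial_ideal I \<Longrightarrow> (a,b,c) \<in> I \<Longrightarrow> (a+p,b+q,c+r) \<in> I"
  unfolding monomial_ideal_def tmul_def by (metis case_prod_conv)

lemma move01: assumes "borel I" "(a,b,c) \<in> I" "i \<le> a" shows "(a-i,b+i,c) \<in> I"
  using assms(3)
proof (induction i)
  case 0 then show ?case using assms(2) by simp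
next
  case (Suc i)
  then have "(a-i,b+i,c) \<in> I" "0 < a - i" by auto
  then have "(a-i-1,b+i+1,c) \<in> I" using assms(1) unfolding borel_def by blast
  then show ?case by (simp add: diff_Suc)
qed

lemma move12: assumes "borel I" "(a,b,c) \<in> I" "j \<le> b" shows "(a,b-j,c+j) \<in> I"
  using assms(3)
proof (induction j)
  case 0 then show ?case using assms(2) by simp
next
  case (Suc j)
  then have "(a,b-j,c+j) \<in> I" "0 < b - j" by auto
  then have "(a,b-j-1,c+j+1) \<in> I" using assms(1) unfolding borel_def by blast
  then show ?case by (simp add: diff_Suc)
qed

lemma reduce0: assumes "borel I" "saturated I" shows "(a,b,c) \<in> I \<longleftrightarrow> (0,b,c) \<in> I"
proof
  assume "(0,b,c) \<in> I"
  then show "(a,b,c) \<in> I" using mono_ideal[of I 0 b c a 0 0] assms(1) unfolding borel_def by simp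
next
  assume h: "(a,b,c) \<in> I"
  have "\<forall>\<beta>. tdeg \<beta> = a \<longrightarrow> tmul (0,b,c) \<beta> \<in> I"
  proof (intro allI impI)
    fix \<beta> assume "tdeg \<beta> = a"
    then obtain p q r where \<beta>: "\<beta> = (p,q,r)" "p+q+r = a" by (cases \<beta>) (auto simp: tdeg_def)
    have "(a-(a-p), b+(a-p), c) \<in> I" by (rule move01[OF assms(1) h]) simp
    moreover have "a-(a-p) = p" "b+(a-p) = b+q+r" using \<beta> by auto
    ultimately have "(p, b+q+r, c) \<in> I" by simp
    from move12[OF assms(1) this, of r] have "(p, b+q+r-r, c+r) \<in> I" by simp
    then show "tmul (0,b,c) \<beta> \<in> I" using \<beta> by (simp add: tmul_def add.commute)
  qed
  then show "(0,b,c) \<in> I" using assms(2) unfolding saturated_def by blast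
qed



lemma weights: assumes "good x y z" "x+y+z = d" "1 \<le> d" "d \<le> 6"
  shows "\<exists>w1 w2. \<forall>c b c' b'. b < Lf x y z c \<longrightarrow> Lf x y z c' \<le> b' \<longrightarrow> w1*b+w2*c < w1*b'+w2*c'"
proof -
  have "(x=1 \<and> y=0 \<and> z=0) \<or> (x=2 \<and> y=0 \<and> z=0) \<or> (x=3 \<and> y=0 \<and> z=0) \<or> (x=2 \<and> y=1 \<and> z=0) \<or> (x=4 \<and> y=0 \<and> z=0) \<or> (x=3 \<and> y=1 \<and> z=0) \<or> (x=5 \<and> y=0 \<and> z=0) \<or> (x=4 \<and> y=1 \<and> z=0) \<or> (x=3 \<and> y=2 \<and> z=0) \<or> (x=6 \<and> y=0 \<and> z=0) \<or> (x=5 \<and> y=1 \<and> z=0) \<or> (x=4 \<and> y=2 \<and> z=0) \<or> (x=3 \<and> y=2 \<and> z=1)" using assms unfolding good_def by presburger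
  then show ?thesis
  proof (elim disjE)
    assume "x=1 \<and> y=0 \<and> z=0"
    then show ?thesis by (intro exI[of _ 1] exI[of _ 1]) (auto simp: Lf_def split: if_splits)
  next
    assume "x=2 \<and> y=0 \<and> z=0"
    then show ?thesis by (intro exI[of _ 1] exI[of _ 2]) (auto simp: Lf_def split: if_splits)
  next
    assume "x=3 \<and> y=0 \<and> z=0"
    then show ?thesis by (intro exI[of _ 1] exI[of _ 3]) (auto simp: Lf_def split: if_splits)
  next
    assume "x=2 \<and> y=1 \<and> z=0"
    then show ?thesis by (intro exI[of _ 1] exI[of _ 1]) (auto simp: Lf_def split: if_splits)
  next
    assume "x=4 \<and> y=0 \<and> z=0"
    then show ?thesis by (intro exI[of _ 1] exI[of _ 4]) (auto simp: Lf_def split: if_splits)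
  next
    assume "x=3 \<and> y=1 \<and> z=0"
    then show ?thesis by (intro exI[of _ 1] exI[of _ 2]) (auto simp: Lf_def split: if_splits)
  next
    assume "x=5 \<and> y=0 \<and> z=0"
    then show ?thesis by (intro exI[of _ 1] exI[of _ 5]) (auto simp: Lf_def split: if_splits)
  next
    assume "x=4 \<and> y=1 \<and> z=0"
    then show ?thesis by (intro exI[of _ 1] exI[of _ 3]) (auto simp: Lf_def split: if_splits)
  next
    assume "x=3 \<and> y=2 \<and> z=0"
    then show ?thesis by (intro exI[of _ 2] exI[of _ 3]) (auto simp: Lf_def split: if_splits)
  next
    assume "x=6 \<and> y=0 \<and> z=0"
    then show ?thesis by (intro exI[of _ 1] exI[of _ 6]) (auto simp: Lf_def split: if_splits)
  next
    assume "x=5 \<and> y=1 \<and> z=0"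
    then show ?thesis by (intro exI[of _ 1] exI[of _ 4]) (auto simp: Lf_def split: if_splits)
  next
    assume "x=4 \<and> y=2 \<and> z=0"
    then show ?thesis by (intro exI[of _ 1] exI[of _ 2]) (auto simp: Lf_def split: if_splits)
  next
    assume "x=3 \<and> y=2 \<and> z=1"
    then show ?thesis by (intro exI[of _ 1] exI[of _ 1]) (auto simp: Lf_def split: if_splits)
  qed
qed



lemma lew_seg:
  assumes sep: "\<forall>c b c' b'. b < L c \<longrightarrow> L c' \<le> b' \<longrightarrow> w1*b+w2*c < w1*b'+w2*c'"
  shows "segment (lew w1 w2) d (IL L \<inter> Tdeg d)"
  unfolding segment_def
proof (intro conjI ballI impI)
  show "IL L \<inter> Tdeg d \<subseteq> Tdeg d" by blast
next
  fix \<tau> \<tau>' assume h: "\<tau> \<in> IL L \<inter> Tdeg d" "\<tau>' \<in> Tdeg d" "lew w1 w2 \<tau> \<tau>' \<and> \<tau>' \<noteq> \<tau>"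
  obtain a b c where t: "\<tau> = (a,b,c)" by (cases \<tau>)
  obtain a' b' c' where t': "\<tau>' = (a',b',c')" by (cases \<tau>')
  show "\<tau>' \<in> IL L \<inter> Tdeg d"
  proof (rule ccontr)
    assume "\<tau>' \<notin> IL L \<inter> Tdeg d"
    then have "b' < L c'" using h t' by auto
    moreover have "L c \<le> b" using h t by auto
    ultimately have "w1*b'+w2*c' < w1*b+w2*c" using sep by blast
    then show False using h t t' unfolding lew_def by auto
  qed
qed

lemma positive:
  assumes bo: "borel I" and sa: "saturated I" and hp: "hilb_poly_const I d" and d: "1 \<le> d" "d \<le> 6"
  shows "\<exists>le. term_order le \<and> hilb_segment_const le d I"
proof -
  have E: "\<And>a b c. (a,b,c) \<in> I \<longleftrightarrow> (0,b,c) \<in> I" using reduce0[OF bo sa] by blast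
  obtain t0 where ht0: "\<And>t. t \<ge> t0 \<Longrightarrow> hilb_fun I t = d" using hp unfolding hilb_poly_const_def by blast
  define N where "N = {(b,c). (0::nat,b,c) \<notin> I}"
  have hf: "hilb_fun I t = card {(b,c). b+c \<le> t \<and> (0,b,c) \<notin> I}" for t
    by (rule hilb_reduce) (use E in blast)
  have bound: "card S \<le> d" if "finite S" "S \<subseteq> N" for S
  proof -
    define t where "t = t0 + sum (\<lambda>(b,c). b+c) S"
    have "S \<subseteq> {(b,c). b+c \<le> t \<and> (0,b,c) \<notin> I}"
    proof
      fix p assume "p \<in> S"
      have "(\<lambda>(b,c). b+c) p \<le> sum (\<lambda>(b,c). b+c) S" by (rule member_le_sum[OF \<open>p \<in> S\<close> _ that(1)]) auto
      then show "p \<in> {(b,c). b+c \<le> t \<and> (0,b,c) \<notin> I}" using \<open>p \<in> S\<close> that(2) unfolding t_def N_def by auto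
    qed
    moreover have "finite {(b,c). b+c \<le> t \<and> (0,b,c) \<notin> I}"
      by (rule finite_subset[of _ "{..t} \<times> {..t}"]) auto
    ultimately have "card S \<le> card {(b,c). b+c \<le> t \<and> (0,b,c) \<notin> I}" by (rule card_mono[rotated])
    also have "\<dots> = d" using hf ht0[of t] unfolding t_def by simp
    finally show ?thesis .
  qed
  have finN: "finite N"
  proof (rule ccontr)
    assume "infinite N"
    then obtain S where "finite S" "card S = Suc d" "S \<subseteq> N" using infinite_arbitrarily_large by blast
    then show False using bound by fastforce
  qed
  have ex: "\<exists>b. (0,b,c) \<in> I" for c
  proof (rule ccontr)
    assume "\<not> ?thesis"
    then have "range (\<lambda>b. (b,c)) \<subseteq> N" unfolding N_def by auto
    moreover have "infinite (range (\<lambda>b::nat. (b,c)))" using finite_imageD[of "\<lambda>b. (b,c)" "UNIV::nat set"] by (auto simp: inj_on_def)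
    ultimately show False using finN finite_subset by blast
  qed
  define l where "l c = (LEAST b. (0,b,c) \<in> I)" for c
  have mi: "monomial_ideal I" using bo unfolding borel_def by blast
  have lmem: "(0,b,c) \<in> I \<longleftrightarrow> l c \<le> b" for b c
  proof
    assume "(0,b,c) \<in> I" then show "l c \<le> b" unfolding l_def by (rule Least_le)
  next
    assume "l c \<le> b"
    have "(0, l c, c) \<in> I" unfolding l_def using ex by (rule LeastI_ex)
    from mono_ideal[OF mi this, of 0 "b - l c" 0] show "(0,b,c) \<in> I" using \<open>l c \<le> b\<close> by simp
  qed
  have "R (l 0) 0 \<union> R (l 1) 1 \<union> R (l 2) 2 \<subseteq> N" unfolding R_def N_def using lmem by auto
  then have sum: "l 0 + l 1 + l 2 \<le> d" using bound rows_card by (metis R_def finite_UnI finite_imageI finite_lessThan)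
  have strict: "l (Suc c) < l c" if "0 < l (Suc c)" for c
  proof -
    have "(0, l (Suc c) - 1, Suc c) \<notin> I" using lmem that by simp
    then have "(0, l (Suc c), c) \<notin> I" using bo that unfolding borel_def
      by (metis Suc_eq_plus1)
    then show ?thesis using lmem by simp
  qed
  have l3: "l 3 = 0"
  proof (rule ccontr)
    assume "l 3 \<noteq> 0"
    then have "l 2 > l 3" "l 1 > l 2" "l 0 > l 1" using strict[of 2] strict[of 1] strict[of 0]
      by (auto simp: numeral_eq_Suc)
    then show False using sum d \<open>l 3 \<noteq> 0\<close> by linarith
  qed
  have lge3: "l c = 0" if "c \<ge> 3" for c
  proof -
    have "(0,0,3) \<in> I" using lmem l3 by simp
    from mono_ideal[OF mi this, of 0 0 "c-3"] have "(0,0,c) \<in> I" using that by simp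
    then show ?thesis using lmem by simp
  qed
  define x y z where "x = l 0" "y = l 1" "z = l 2"
  have lL: "l c = Lf x y z c" for c using lge3[of c] unfolding Lf_def x_y_z_def
    by (auto simp: numeral_eq_Suc)
  have IeqL: "I = IL (Lf x y z)"
  proof (rule set_eqI)
    fix \<alpha> show "\<alpha> \<in> I \<longleftrightarrow> \<alpha> \<in> IL (Lf x y z)"
    proof (cases \<alpha>)
      case (fields a b c)
      have "\<alpha> \<in> I \<longleftrightarrow> (0,b,c) \<in> I" using E fields by blast
      also have "\<dots> \<longleftrightarrow> Lf x y z c \<le> b" using lmem lL by metis
      finally show ?thesis using fields by simp
    qed
  qed
  have gd: "good x y z" unfolding good_def x_y_z_def using strict[of 0] strict[of 1]
    by (auto simp: numeral_eq_Suc)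
  have "x + y + z = d"
    using ht0[of "t0 + x + 2"] IL_hilb[OF gd, of "t0 + x + 2"] IeqL by simp
  then obtain w1 w2 where sep: "\<forall>c b c' b'. b < Lf x y z c \<longrightarrow> Lf x y z c' \<le> b' \<longrightarrow> w1*b+w2*c < w1*b'+w2*c'"
    using weights[OF gd _ d] by blast
  have "(0,x,0) \<in> IL (Lf x y z)" by (simp add: Lf_def)
  then have "I \<noteq> {}" using IeqL by blast
  then have "hilb_segment_const (lew w1 w2) d I"
    unfolding hilb_segment_const_def using bo sa lew_seg[OF sep] IeqL by simp
  then show ?thesis using lew_to by blast
qed




lemma negative: assumes "7 \<le> d"
  shows "\<exists>I. borel I \<and> saturated I \<and> hilb_poly_const I d \<and>
                 (\<forall>le. term_order le \<longrightarrow> \<not> hilb_segment_const le d I)"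
proof (cases "d = 7")
  case True
  have gd: "good 4 3 0" unfolding good_def by simp
  have hp: "hilb_poly_const (IL (Lf 4 3 0)) d" using IL_hpc[OF gd] True by simp
  show ?thesis
  proof (intro exI conjI allI impI)
    fix le assume to: "term_order le"
    show "\<not> hilb_segment_const le d (IL (Lf 4 3 0))"
    proof
      assume "hilb_segment_const le d (IL (Lf 4 3 0))"
      then have seg: "segment le d (IL (Lf 4 3 0) \<inter> Tdeg d)" unfolding hilb_segment_const_def by blast
      show False
        by (rule obstruction[OF to seg, of "(4,2,1)" "(4,2,1)" "(3,4,0)" "(5,0,2)"])
           (use True in \<open>simp_all add: Tdeg_def tdeg_def Lf_def tmul_def\<close>)
    qed
  qed (use IL_borel[OF gd] IL_sat hp in auto)
next
  case False
  then have d8: "8 \<le> d" using assms by simp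
  have gd: "good (d-3) 2 1" unfolding good_def using d8 by simp
  have hp: "hilb_poly_const (IL (Lf (d-3) 2 1)) d" proof -
    have "d - 3 + 2 + 1 = d" using d8 by simp
    then show ?thesis using IL_hpc[OF gd] by metis
  qed
  show ?thesis
  proof (intro exI conjI allI impI)
    fix le assume to: "term_order le"
    show "\<not> hilb_segment_const le d (IL (Lf (d-3) 2 1))"
    proof
      assume "hilb_segment_const le d (IL (Lf (d-3) 2 1))"
      then have seg: "segment le d (IL (Lf (d-3) 2 1) \<inter> Tdeg d)" unfolding hilb_segment_const_def by blast
      show False
        by (rule obstruction[OF to seg, of "(4,d-4,0)" "(d-2,0,2)" "(d-3,2,1)" "(5,d-6,1)"])
           (use d8 in \<open>simp_all add: Tdeg_def tdeg_def Lf_def tmul_def\<close>)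
    qed
  qed (use IL_borel[OF gd] IL_sat hp in auto)
qed

theorem mainTheorem6:
  shows "(\<forall>d::nat. 1 \<le> d \<and> d \<le> 6 \<longrightarrow>
            (\<forall>I. borel I \<and> saturated I \<and> hilb_poly_const I d \<longrightarrow>
                 (\<exists>le. term_order le \<and> hilb_segment_const le d I))) \<and>
         (\<forall>d::nat. 7 \<le> d \<longrightarrow>
            (\<exists>I. borel I \<and> saturated I \<and> hilb_poly_const I d \<and>
                 (\<forall>le. term_order le \<longrightarrow> \<not> hilb_segment_const le d I)))"
  using positive negative by blast


end
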